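(* Let $G$ be a finite group and let $R\colon\mathcal{I}_G\text{-spaces}\to\mathcal{I}\text{-}G\text{spaces}$ be restriction along $\iota\colon\mathcal{I}\to\mathcal{I}_G$, with left adjoint $E$ given by left Kan extension along $\iota$. Then the counit $\epsilon\colon ER\to\mathrm{Id}_{\mathcal{I}_G\text{-spaces}}$ is a natural isomorphism.
   Context: $\mathcal{I}_G$: objects $(\mathbb{R}^n,\rho)$, $\rho\colon G\to O(n)$ a homomorphism; morphisms all linear isometric isomorphisms, with disjoint basepoint and conjugation $G$-action. $\mathcal{T}op_G$: based $G$-spaces and all based maps with conjugation $G$-action. An $\mathcal{I}_G$-space is a $G$-continuous functor $\mathcal{I}_G\to\mathcal{T}op_G$ (i.e. $A(gfg^{-1})=gA(f)g^{-1}$), with morphisms the natural transformations having $G$-equivariant components. $\mathcal{I}=\mathcal{I}_e$; $\iota\colon\mathcal{I}\to\mathcal{I}_G$ gives $\mathbb{R}^n$ the trivial action. An $\mathcal{I}$-$G$space is a continuous functor from $\mathcal{I}$ to based $G$-spaces and equivariant maps. For an $\mathcal{I}$-$G$space $X$ and $V\in\mathcal{I}_G$, $EX(V)=\coprod_n\mathcal{I}_G(\mathbb{R}^n,V)\times X(\mathbb{R}^n)/\sim$, where $[st,x]\sim[s,t_*x]$ for $t$ a morphism of $\mathcal{I}$, with diagonal $G$-action. For an $\mathcal{I}_G$-space $A$, the counit component $\epsilon_A\colon ERA(V)\to A(V)$ is $[s,a]\mapsto s_*a=A(s)(a)$. *)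

theory Defs
  imports "HOL-Analysis.Analysis" "HOL-Algebra.Group"
begin

text \<open>An n x n real matrix is an element of the extensional function space on
 {..<n} x {..<n}; it represents a linear map R^n -> R^n on column vectors.\<close>

type_synonym mat = "nat \<times> nat \<Rightarrow> real"

definition Mats :: "nat \<Rightarrow> mat set" where
  "Mats n = PiE ({..<n} \<times> {..<n}) (\<lambda>_. UNIV)"

definition matmul :: "nat \<Rightarrow> mat \<Rightarrow> mat \<Rightarrow> mat" where
  "matmul n M N = (\<lambda>(i,j) \<in> {..<n} \<times> {..<n}. \<Sum>k<n. M (i,k) * N (k,j))"

definition idm :: "nat \<Rightarrow> mat" where
  "idm n = (\<lambda>(i,j) \<in> {..<n} \<times> {..<n}. if i = j then 1 else 0)"

definition transp :: "nat \<Rightarrow> mat \<Rightarrow> mat" where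
  "transp n M = (\<lambda>(i,j) \<in> {..<n} \<times> {..<n}. M (j,i))"

definition Orth :: "nat \<Rightarrow> mat set" where
  "Orth n = {M \<in> Mats n. matmul n (transp n M) M = idm n}"

definition mat_top :: "nat \<Rightarrow> mat topology" where
  "mat_top n = product_topology (\<lambda>_. euclideanreal) ({..<n} \<times> {..<n})"

text \<open>An object (R^n, rho) with rho : G -> O(n) a homomorphism (extensional on carrier G).\<close>
type_synonym 'g obj = "nat \<times> ('g \<Rightarrow> mat)"

definition Obj :: "('g, 'b) monoid_scheme \<Rightarrow> 'g obj set" where
  "Obj G = {(n, \<rho>). \<rho> \<in> extensional (carrier G) \<and> (\<forall>g\<in>carrier G. \<rho> g \<in> Orth n) \<and>
      (\<forall>g\<in>carrier G. \<forall>h\<in>carrier G. \<rho> (g \<otimes>\<^bsub>G\<^esub> h) = matmul n (\<rho> g) (\<rho> h))}"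

text \<open>R^n with trivial action (image of iota : I -> I_G).\<close>
definition trivo :: "('g, 'b) monoid_scheme \<Rightarrow> nat \<Rightarrow> 'g obj" where
  "trivo G n = (n, (\<lambda>g \<in> carrier G. idm n))"

text \<open>Morphisms: all linear isometric isomorphisms (not necessarily equivariant).\<close>
definition Hom :: "'g obj \<Rightarrow> 'g obj \<Rightarrow> mat set" where
  "Hom V W = (if fst V = fst W then Orth (fst V) else {})"

definition Hom_top :: "'g obj \<Rightarrow> 'g obj \<Rightarrow> mat topology" where
  "Hom_top V W = subtopology (mat_top (fst V)) (Hom V W)"

definition conj_hom :: "('g, 'b) monoid_scheme \<Rightarrow> 'g obj \<Rightarrow> 'g obj \<Rightarrow> 'g \<Rightarrow> mat \<Rightarrow> mat" where
  "conj_hom G V W g f = matmul (fst V) (snd W g) (matmul (fst V) f (snd V (inv\<^bsub>G\<^esub> g)))"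

definition based_Gspace :: "('g, 'b) monoid_scheme \<Rightarrow> 'a topology \<Rightarrow> 'a \<Rightarrow> ('g \<Rightarrow> 'a \<Rightarrow> 'a) \<Rightarrow> bool" where
  "based_Gspace G X b a \<longleftrightarrow> b \<in> topspace X \<and>
     (\<forall>g\<in>carrier G. continuous_map X X (a g) \<and> a g b = b) \<and>
     (\<forall>x\<in>topspace X. a \<one>\<^bsub>G\<^esub> x = x) \<and>
     (\<forall>g\<in>carrier G. \<forall>h\<in>carrier G. \<forall>x\<in>topspace X. a (g \<otimes>\<^bsub>G\<^esub> h) x = a g (a h x))"

record ('g, 'a) IGspace =
  sp  :: "'g obj \<Rightarrow> 'a topology"
  bp  :: "'g obj \<Rightarrow> 'a"
  act :: "'g obj \<Rightarrow> 'g \<Rightarrow> 'a \<Rightarrow> 'a"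
  mor :: "'g obj \<Rightarrow> 'g obj \<Rightarrow> mat \<Rightarrow> 'a \<Rightarrow> 'a"

text \<open>A G-continuous (topologically enriched) functor I_G -> Top_G.\<close>
definition IG_space :: "('g, 'b) monoid_scheme \<Rightarrow> ('g, 'a) IGspace \<Rightarrow> bool" where
  "IG_space G A \<longleftrightarrow>
     (\<forall>V\<in>Obj G. based_Gspace G (sp A V) (bp A V) (act A V)) \<and>
     (\<forall>V\<in>Obj G. \<forall>W\<in>Obj G.
        continuous_map (prod_topology (Hom_top V W) (sp A V)) (sp A W) (\<lambda>(f, x). mor A V W f x) \<and>
        (\<forall>f\<in>Hom V W. mor A V W f (bp A V) = bp A W)) \<and>
     (\<forall>V\<in>Obj G. \<forall>x\<in>topspace (sp A V). mor A V V (idm (fst V)) x = x) \<and>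
     (\<forall>U\<in>Obj G. \<forall>V\<in>Obj G. \<forall>W\<in>Obj G. \<forall>f\<in>Hom U V. \<forall>g\<in>Hom V W. \<forall>x\<in>topspace (sp A U).
        mor A U W (matmul (fst U) g f) x = mor A V W g (mor A U V f x)) \<and>
     (\<forall>V\<in>Obj G. \<forall>W\<in>Obj G. \<forall>g\<in>carrier G. \<forall>f\<in>Hom V W. \<forall>x\<in>topspace (sp A V).
        mor A V W (conj_hom G V W g f) x = act A W g (mor A V W f (act A V (inv\<^bsub>G\<^esub> g) x)))"

definition IG_morph :: "('g, 'b) monoid_scheme \<Rightarrow> ('g, 'a) IGspace \<Rightarrow> ('g, 'c) IGspace
                         \<Rightarrow> ('g obj \<Rightarrow> 'a \<Rightarrow> 'c) \<Rightarrow> bool" where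
  "IG_morph G A B \<phi> \<longleftrightarrow>
     (\<forall>V\<in>Obj G. continuous_map (sp A V) (sp B V) (\<phi> V) \<and> \<phi> V (bp A V) = bp B V \<and>
        (\<forall>g\<in>carrier G. \<forall>x\<in>topspace (sp A V). \<phi> V (act A V g x) = act B V g (\<phi> V x))) \<and>
     (\<forall>V\<in>Obj G. \<forall>W\<in>Obj G. \<forall>f\<in>Hom V W. \<forall>x\<in>topspace (sp A V).
        \<phi> W (mor A V W f x) = mor B V W f (\<phi> V x))"

record ('g, 'a) IGsp =
  Isp  :: "nat \<Rightarrow> 'a topology"
  Ibp  :: "nat \<Rightarrow> 'a"
  Iact :: "nat \<Rightarrow> 'g \<Rightarrow> 'a \<Rightarrow> 'a"
  Imor :: "nat \<Rightarrow> nat \<Rightarrow> mat \<Rightarrow> 'a \<Rightarrow> 'a"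

definition Res :: "('g, 'b) monoid_scheme \<Rightarrow> ('g, 'a) IGspace \<Rightarrow> ('g, 'a) IGsp" where
  "Res G A = \<lparr>Isp = (\<lambda>n. sp A (trivo G n)), Ibp = (\<lambda>n. bp A (trivo G n)),
              Iact = (\<lambda>n. act A (trivo G n)),
              Imor = (\<lambda>m n. mor A (trivo G m) (trivo G n))\<rparr>"

definition quot_top :: "'x topology \<Rightarrow> ('x \<Rightarrow> 'y) \<Rightarrow> 'y topology" where
  "quot_top X q = topology (\<lambda>U. U \<subseteq> q ` topspace X \<and> openin X {x \<in> topspace X. q x \<in> U})"

definition coprod :: "('g, 'b) monoid_scheme \<Rightarrow> ('g, 'a) IGsp \<Rightarrow> 'g obj \<Rightarrow> (nat \<times> mat \<times> 'a) topology" where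
  "coprod G X V = sum_topology (\<lambda>n. prod_topology (Hom_top (trivo G n) V) (Isp X n)) UNIV"

definition erel :: "('g, 'b) monoid_scheme \<Rightarrow> ('g, 'a) IGsp \<Rightarrow> 'g obj
                    \<Rightarrow> nat \<times> mat \<times> 'a \<Rightarrow> nat \<times> mat \<times> 'a \<Rightarrow> bool" where
  "erel G X V z z' \<longleftrightarrow> (\<exists>m n s t x. t \<in> Hom (trivo G m) (trivo G n) \<and> s \<in> Hom (trivo G n) V \<and>
       x \<in> topspace (Isp X m) \<and>
       z = (m, matmul m s t, x) \<and> z' = (n, s, Imor X m n t x))"

definition eclass :: "('g, 'b) monoid_scheme \<Rightarrow> ('g, 'a) IGsp \<Rightarrow> 'g obj
                      \<Rightarrow> nat \<times> mat \<times> 'a \<Rightarrow> (nat \<times> mat \<times> 'a) set" where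
  "eclass G X V z = {z'. equivclp (erel G X V) z z'}"

definition E_top :: "('g, 'b) monoid_scheme \<Rightarrow> ('g, 'a) IGsp \<Rightarrow> 'g obj \<Rightarrow> (nat \<times> mat \<times> 'a) set topology" where
  "E_top G X V = quot_top (coprod G X V) (eclass G X V)"

definition E_rep :: "('g, 'b) monoid_scheme \<Rightarrow> ('g, 'a) IGsp \<Rightarrow> 'g obj
                     \<Rightarrow> (nat \<times> mat \<times> 'a) set \<Rightarrow> nat \<times> mat \<times> 'a" where
  "E_rep G X V C = (SOME z. z \<in> topspace (coprod G X V) \<and> eclass G X V z = C)"

text \<open>diagonal G-action: g[s,x] = [g.s, g x], where g.s = rho_V(g) s (source has trivial action)\<close>
definition E_act :: "('g, 'b) monoid_scheme \<Rightarrow> ('g, 'a) IGsp \<Rightarrow> 'g obj \<Rightarrow> 'g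
                     \<Rightarrow> (nat \<times> mat \<times> 'a) set \<Rightarrow> (nat \<times> mat \<times> 'a) set" where
  "E_act G X V g C = (case E_rep G X V C of (n, s, x) \<Rightarrow>
       eclass G X V (n, conj_hom G (trivo G n) V g s, Iact X n g x))"

definition E_bp :: "('g, 'b) monoid_scheme \<Rightarrow> ('g, 'a) IGsp \<Rightarrow> 'g obj \<Rightarrow> (nat \<times> mat \<times> 'a) set" where
  "E_bp G X V = eclass G X V (fst V, idm (fst V), Ibp X (fst V))"

definition E_mor :: "('g, 'b) monoid_scheme \<Rightarrow> ('g, 'a) IGsp \<Rightarrow> 'g obj \<Rightarrow> 'g obj \<Rightarrow> mat
                     \<Rightarrow> (nat \<times> mat \<times> 'a) set \<Rightarrow> (nat \<times> mat \<times> 'a) set" where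
  "E_mor G X V W f C = (case E_rep G X V C of (n, s, x) \<Rightarrow>
       eclass G X W (n, matmul n f s, x))"

definition ER_map :: "('g, 'b) monoid_scheme \<Rightarrow> ('g, 'a) IGspace \<Rightarrow> ('g, 'c) IGspace
                      \<Rightarrow> ('g obj \<Rightarrow> 'a \<Rightarrow> 'c) \<Rightarrow> 'g obj
                      \<Rightarrow> (nat \<times> mat \<times> 'a) set \<Rightarrow> (nat \<times> mat \<times> 'c) set" where
  "ER_map G A B \<phi> V C = (case E_rep G (Res G A) V C of (n, s, x) \<Rightarrow>
       eclass G (Res G B) V (n, s, \<phi> (trivo G n) x))"

definition counit :: "('g, 'b) monoid_scheme \<Rightarrow> ('g, 'a) IGspace \<Rightarrow> 'g obj
                      \<Rightarrow> (nat \<times> mat \<times> 'a) set \<Rightarrow> 'a" where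
  "counit G A V C = (case E_rep G (Res G A) V C of (n, s, x) \<Rightarrow> mor A (trivo G n) V s x)"

end

theory Submission
  imports Defs
begin

lemma Mats_ext: "M \<in> Mats n \<Longrightarrow> (i,j) \<notin> {..<n}\<times>{..<n} \<Longrightarrow> M (i,j) = undefined"
  unfolding Mats_def by (auto simp: PiE_def extensional_def)

lemma matmul_Mats: "matmul n M N \<in> Mats n"
  unfolding Mats_def matmul_def by auto

lemma idm_Mats: "idm n \<in> Mats n"
  unfolding Mats_def idm_def by auto

lemma transp_Mats: "transp n M \<in> Mats n"
  unfolding Mats_def transp_def by auto

lemma Mats_eqI: "M \<in> Mats n \<Longrightarrow> N \<in> Mats n \<Longrightarrow> (\<And>i j. i<n \<Longrightarrow> j<n \<Longrightarrow> M(i,j) = N(i,j)) \<Longrightarrow> M = N"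
  unfolding Mats_def by (rule PiE_ext) auto

lemma sum_delta_l: "i < (n::nat) \<Longrightarrow> (\<Sum>k<n. (if i = k then 1 else 0) * (f k::real)) = f i"
proof -
  assume "i<n"
  have "(\<Sum>k<n. (if i = k then 1 else 0) * (f k::real)) = (\<Sum>k<n. if k = i then f k else 0)"
    by (rule sum.cong) auto
  then show ?thesis using \<open>i<n\<close> by (simp add: sum.delta)
qed

lemma sum_delta_r: "j < (n::nat) \<Longrightarrow> (\<Sum>k<n. (f k::real) * (if k = j then 1 else 0)) = f j"
proof -
  assume "j<n"
  have "(\<Sum>k<n. (f k::real) * (if k = j then 1 else 0)) = (\<Sum>k<n. if k = j then f k else 0)"
    by (rule sum.cong) auto
  then show ?thesis using \<open>j<n\<close> by (simp add: sum.delta)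
qed

lemma matmul_idm_left: "M \<in> Mats n \<Longrightarrow> matmul n (idm n) M = M"
  apply (rule Mats_eqI[OF matmul_Mats], assumption)
  apply (simp add: matmul_def idm_def sum_delta_l)
  done

lemma matmul_idm_right: "M \<in> Mats n \<Longrightarrow> matmul n M (idm n) = M"
  apply (rule Mats_eqI[OF matmul_Mats], assumption)
  apply (simp add: matmul_def idm_def sum_delta_r)
  done

lemma matmul_assoc: "matmul n (matmul n A B) C = matmul n A (matmul n B C)"
  apply (rule Mats_eqI[OF matmul_Mats matmul_Mats])
  apply (simp add: matmul_def sum_distrib_left sum_distrib_right mult.assoc)
  apply (rule sum.swap)
  done

lemma transp_matmul: "transp n (matmul n M N) = matmul n (transp n N) (transp n M)"
  apply (rule Mats_eqI[OF transp_Mats matmul_Mats])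
  apply (simp add: matmul_def transp_def mult.commute)
  done

lemma idm_Orth: "idm n \<in> Orth n"
proof -
  have "transp n (idm n) = idm n"
    by (rule Mats_eqI[OF transp_Mats idm_Mats]) (auto simp: transp_def idm_def)
  then show ?thesis unfolding Orth_def using matmul_idm_left[OF idm_Mats] idm_Mats by simp
qed

lemma matmul_Orth: assumes "M \<in> Orth n" "N \<in> Orth n" shows "matmul n M N \<in> Orth n"
proof -
  have m: "matmul n (transp n M) M = idm n" "N \<in> Mats n" "matmul n (transp n N) N = idm n"
    using assms unfolding Orth_def by auto
  have "matmul n (transp n (matmul n M N)) (matmul n M N)
      = matmul n (transp n N) (matmul n (matmul n (transp n M) M) N)"
    by (simp add: transp_matmul matmul_assoc)
  also have "\<dots> = idm n" using m by (simp add: matmul_idm_left)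
  finally show ?thesis unfolding Orth_def using matmul_Mats by simp
qed


lemma istopology_quot: "istopology (\<lambda>U. U \<subseteq> q ` topspace X \<and> openin X {x \<in> topspace X. q x \<in> U})"
proof -
  have 1: "{x \<in> topspace X. q x \<in> S \<inter> T} = {x \<in> topspace X. q x \<in> S} \<inter> {x \<in> topspace X. q x \<in> T}" for S T
    by auto
  have 2: "{x \<in> topspace X. q x \<in> \<Union>K} = (\<Union>U\<in>K. {x \<in> topspace X. q x \<in> U})" for K
    by auto
  show ?thesis unfolding istopology_def 1 2 by auto
qed

lemma openin_quot_top: "openin (quot_top X q) U \<longleftrightarrow> U \<subseteq> q ` topspace X \<and> openin X {x \<in> topspace X. q x \<in> U}"
  unfolding quot_top_def by (simp add: topology_inverse'[OF istopology_quot])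

lemma topspace_quot_top: "topspace (quot_top X q) = q ` topspace X"
proof -
  have "openin (quot_top X q) (q ` topspace X)"
    unfolding openin_quot_top by (auto intro: openin_subopen[THEN iffD2])
  moreover have "\<And>U. openin (quot_top X q) U \<Longrightarrow> U \<subseteq> q ` topspace X"
    unfolding openin_quot_top by auto
  ultimately show ?thesis by (metis openin_subset openin_topspace subset_antisym)
qed

lemma continuous_map_quot: "continuous_map X (quot_top X q) q"
  unfolding continuous_map_def topspace_quot_top openin_quot_top by auto

lemma continuous_map_from_quot:
  assumes "continuous_map X Y h" "\<And>x. x \<in> topspace X \<Longrightarrow> f (q x) = h x"
  shows "continuous_map (quot_top X q) Y f"
  unfolding continuous_map_def
proof (intro conjI allI impI)
  show "f \<in> topspace (quot_top X q) \<rightarrow> topspace Y"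
    using assms continuous_map_funspace unfolding topspace_quot_top by fastforce
  fix U assume U: "openin Y U"
  have "{x \<in> topspace X. q x \<in> {x \<in> q ` topspace X. f x \<in> U}} = {x \<in> topspace X. h x \<in> U}"
    using assms(2) by (auto, metis assms(2))
  then show "openin (quot_top X q) {x \<in> topspace (quot_top X q). f x \<in> U}"
    unfolding topspace_quot_top openin_quot_top
    using assms(1) U by (simp add: continuous_map_def)
qed

lemma continuous_map_from_sum:
  assumes "\<And>i. i \<in> I \<Longrightarrow> continuous_map (X i) Y (\<lambda>x. h (i,x))"
  shows "continuous_map (sum_topology X I) Y h"
  unfolding continuous_map_def openin_sum_topology
proof (intro conjI allI impI)
  show "h \<in> topspace (sum_topology X I) \<rightarrow> topspace Y"
    using assms continuous_map_funspace by fastforce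
  fix U assume U: "openin Y U"
  show "{x \<in> topspace (sum_topology X I). h x \<in> U} \<subseteq> Sigma I (topspace \<circ> X)" by auto
  show "\<forall>i\<in>I. openin (X i) {x. (i, x) \<in> {x \<in> topspace (sum_topology X I). h x \<in> U}}"
  proof
    fix i assume i: "i \<in> I"
    have "{x. (i, x) \<in> {x \<in> topspace (sum_topology X I). h x \<in> U}} = {x \<in> topspace (X i). h (i,x) \<in> U}"
      using i by auto
    then show "openin (X i) {x. (i, x) \<in> {x \<in> topspace (sum_topology X I). h x \<in> U}}"
      using assms[OF i] U by (simp add: continuous_map_def)
  qed
qed




lemma trivo_Obj: assumes "group G" shows "trivo G n \<in> Obj G"
proof -
  interpret group G by fact
  show ?thesis unfolding Obj_def trivo_def
    using idm_Orth matmul_idm_left[OF idm_Mats] by auto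
qed

lemma fst_trivo[simp]: "fst (trivo G n) = n" by (simp add: trivo_def)

lemma snd_trivo: "g \<in> carrier G \<Longrightarrow> snd (trivo G n) g = idm n" by (simp add: trivo_def)

lemma Hom_trivo: "s \<in> Hom (trivo G n) V \<longleftrightarrow> fst V = n \<and> s \<in> Orth n"
  by (auto simp: Hom_def)

lemma Orth_Mats: "M \<in> Orth n \<Longrightarrow> M \<in> Mats n" by (simp add: Orth_def)

lemma topspace_Hom_top[simp]: "topspace (Hom_top V W) = Hom V W"
proof -
  have "topspace (mat_top (fst V)) = Mats (fst V)"
    by (simp add: mat_top_def Mats_def)
  then show ?thesis unfolding Hom_top_def Hom_def using Orth_Mats by auto
qed

lemma topspace_coprod: "topspace (coprod G X V) = {(n, s, x). s \<in> Hom (trivo G n) V \<and> x \<in> topspace (Isp X n)}"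
  unfolding coprod_def by auto

lemma topspace_E_top: "topspace (E_top G X V) = eclass G X V ` topspace (coprod G X V)"
  unfolding E_top_def by (simp add: topspace_quot_top)

lemma eclass_eq: "equivclp (erel G X V) z z' \<Longrightarrow> eclass G X V z = eclass G X V z'"
  unfolding eclass_def by (auto intro: equivclp_trans equivclp_sym)

lemma eclass_erel: "erel G X V z z' \<Longrightarrow> eclass G X V z = eclass G X V z'"
  by (rule eclass_eq) auto

lemma E_rep: assumes "C \<in> topspace (E_top G X V)"
  shows "E_rep G X V C \<in> topspace (coprod G X V) \<and> eclass G X V (E_rep G X V C) = C"
proof -
  from assms have "\<exists>z. z \<in> topspace (coprod G X V) \<and> eclass G X V z = C"
    unfolding topspace_E_top by auto
  then show ?thesis unfolding E_rep_def by (rule someI_ex)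
qed

lemma eclass_equivclp: assumes "eclass G X V w = eclass G X V z" shows "equivclp (erel G X V) w z"
proof -
  have "z \<in> eclass G X V z" by (simp add: eclass_def)
  then have "z \<in> eclass G X V w" using assms by simp
  then show ?thesis by (simp add: eclass_def)
qed

lemma IG_facts:
  assumes "IG_space G A"
  shows IG_based: "V \<in> Obj G \<Longrightarrow> based_Gspace G (sp A V) (bp A V) (act A V)"
    and IG_cont: "V \<in> Obj G \<Longrightarrow> W \<in> Obj G \<Longrightarrow>
        continuous_map (prod_topology (Hom_top V W) (sp A V)) (sp A W) (\<lambda>(f, x). mor A V W f x)"
    and IG_bp: "V \<in> Obj G \<Longrightarrow> W \<in> Obj G \<Longrightarrow> f \<in> Hom V W \<Longrightarrow> mor A V W f (bp A V) = bp A W"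
    and IG_id: "V \<in> Obj G \<Longrightarrow> x \<in> topspace (sp A V) \<Longrightarrow> mor A V V (idm (fst V)) x = x"
    and IG_comp: "U \<in> Obj G \<Longrightarrow> V \<in> Obj G \<Longrightarrow> W \<in> Obj G \<Longrightarrow> f \<in> Hom U V \<Longrightarrow> h \<in> Hom V W \<Longrightarrow>
        x \<in> topspace (sp A U) \<Longrightarrow> mor A U W (matmul (fst U) h f) x = mor A V W h (mor A U V f x)"
    and IG_conj: "V \<in> Obj G \<Longrightarrow> W \<in> Obj G \<Longrightarrow> g \<in> carrier G \<Longrightarrow> f \<in> Hom V W \<Longrightarrow> x \<in> topspace (sp A V) \<Longrightarrow>
        mor A V W (conj_hom G V W g f) x = act A W g (mor A V W f (act A V (inv\<^bsub>G\<^esub> g) x))"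
  proof -
  note all = assms[unfolded IG_space_def]
  note d1 = all[THEN conjunct1]
  note d2 = all[THEN conjunct2, THEN conjunct1]
  note d3 = all[THEN conjunct2, THEN conjunct2, THEN conjunct1]
  note d4 = all[THEN conjunct2, THEN conjunct2, THEN conjunct2, THEN conjunct1]
  note d5 = all[THEN conjunct2, THEN conjunct2, THEN conjunct2, THEN conjunct2]
  show "V \<in> Obj G \<Longrightarrow> based_Gspace G (sp A V) (bp A V) (act A V)" using d1 by (rule bspec)
  show "V \<in> Obj G \<Longrightarrow> W \<in> Obj G \<Longrightarrow>
        continuous_map (prod_topology (Hom_top V W) (sp A V)) (sp A W) (\<lambda>(f, x). mor A V W f x)"
    using d2 by simp
  show "V \<in> Obj G \<Longrightarrow> W \<in> Obj G \<Longrightarrow> f \<in> Hom V W \<Longrightarrow> mor A V W f (bp A V) = bp A W" using d2 by simp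
  show "V \<in> Obj G \<Longrightarrow> x \<in> topspace (sp A V) \<Longrightarrow> mor A V V (idm (fst V)) x = x" using d3 by simp
  show "U \<in> Obj G \<Longrightarrow> V \<in> Obj G \<Longrightarrow> W \<in> Obj G \<Longrightarrow> f \<in> Hom U V \<Longrightarrow> h \<in> Hom V W \<Longrightarrow>
        x \<in> topspace (sp A U) \<Longrightarrow> mor A U W (matmul (fst U) h f) x = mor A V W h (mor A U V f x)" using d4 by simp
  show "V \<in> Obj G \<Longrightarrow> W \<in> Obj G \<Longrightarrow> g \<in> carrier G \<Longrightarrow> f \<in> Hom V W \<Longrightarrow> x \<in> topspace (sp A V) \<Longrightarrow>
        mor A V W (conj_hom G V W g f) x = act A W g (mor A V W f (act A V (inv\<^bsub>G\<^esub> g) x))" using d5 by simp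
qed

lemma IG_mor_top:
  assumes "IG_space G A" "V \<in> Obj G" "W \<in> Obj G" "f \<in> Hom V W" "x \<in> topspace (sp A V)"
  shows "mor A V W f x \<in> topspace (sp A W)"
proof -
  have "(f, x) \<in> topspace (prod_topology (Hom_top V W) (sp A V))" using assms by simp
  from continuous_map_image_subset_topspace[OF IG_cont[OF assms(1-3)]] this
  show ?thesis by auto
qed

definition Fc :: "('g, 'b) monoid_scheme \<Rightarrow> ('g, 'a) IGspace \<Rightarrow> 'g obj \<Rightarrow> nat \<times> mat \<times> 'a \<Rightarrow> 'a" where
  "Fc G A V z = (case z of (n, s, x) \<Rightarrow> mor A (trivo G n) V s x)"

lemma Fc_erel:
  assumes "group G" "IG_space G A" "V \<in> Obj G" "erel G (Res G A) V z z'"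
  shows "Fc G A V z = Fc G A V z'"
proof -
  from assms(4) obtain m n s t x where st: "t \<in> Hom (trivo G m) (trivo G n)" "s \<in> Hom (trivo G n) V"
    "x \<in> topspace (sp A (trivo G m))" "z = (m, matmul m s t, x)" "z' = (n, s, mor A (trivo G m) (trivo G n) t x)"
    unfolding erel_def Res_def by auto
  show ?thesis using st IG_comp[OF assms(2) trivo_Obj[OF assms(1)] trivo_Obj[OF assms(1)] assms(3) st(1,2,3)]
    by (simp add: Fc_def)
qed

lemma Fc_equivclp:
  assumes "group G" "IG_space G A" "V \<in> Obj G" "equivclp (erel G (Res G A) V) z z'"
  shows "Fc G A V z = Fc G A V z'"
  using assms(4)
proof (induct rule: equivclp_induct)
  case base then show ?case by simp
next
  case (step y w) then show ?case using Fc_erel[OF assms(1-3)] by metis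
qed

lemma counit_rep:
  "counit G A V C = Fc G A V (E_rep G (Res G A) V C)"
  unfolding counit_def Fc_def by simp

lemma counit_eclass:
  assumes "group G" "IG_space G A" "V \<in> Obj G" "z \<in> topspace (coprod G (Res G A) V)"
  shows "counit G A V (eclass G (Res G A) V z) = Fc G A V z"
proof -
  let ?C = "eclass G (Res G A) V z"
  have C: "?C \<in> topspace (E_top G (Res G A) V)" using assms(4) by (simp add: topspace_E_top)
  from E_rep[OF C] have "equivclp (erel G (Res G A) V) (E_rep G (Res G A) V ?C) z"
    by (intro eclass_equivclp) auto
  then show ?thesis using Fc_equivclp[OF assms(1-3)] counit_rep by metis
qed

theorem lemmaA6:
  fixes G :: "('g, 'b) monoid_scheme"
    and A :: "('g, 'a) IGspace"
    and B :: "('g, 'c) IGspace"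
  assumes "group G" and "finite (carrier G)" and "IG_space G A"
  shows "(\<forall>V\<in>Obj G.
            homeomorphic_map (E_top G (Res G A) V) (sp A V) (counit G A V) \<and>
            counit G A V (E_bp G (Res G A) V) = bp A V \<and>
            (\<forall>g\<in>carrier G. \<forall>C\<in>topspace (E_top G (Res G A) V).
               counit G A V (E_act G (Res G A) V g C) = act A V g (counit G A V C))) \<and>
         (\<forall>V\<in>Obj G. \<forall>W\<in>Obj G. \<forall>f\<in>Hom V W. \<forall>C\<in>topspace (E_top G (Res G A) V).
            counit G A W (E_mor G (Res G A) V W f C) = mor A V W f (counit G A V C)) \<and>
         (\<forall>\<phi>. IG_space G B \<and> IG_morph G A B \<phi> \<longrightarrow>
            (\<forall>V\<in>Obj G. \<forall>C\<in>topspace (E_top G (Res G A) V).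
               counit G B V (ER_map G A B \<phi> V C) = \<phi> V (counit G A V C)))"
proof -
  note grp = assms(1) and IA = assms(3)
  interpret group G by (rule grp)
  have TO: "\<And>n. trivo G n \<in> Obj G" by (rule trivo_Obj[OF grp])
  have RA: "Isp (Res G A) n = sp A (trivo G n)" "Imor (Res G A) m n = mor A (trivo G m) (trivo G n)"
    "Iact (Res G A) n = act A (trivo G n)" "Ibp (Res G A) n = bp A (trivo G n)" for m n
    by (simp_all add: Res_def)
  have tsp: "z \<in> topspace (coprod G (Res G A) V) \<longleftrightarrow>
      (\<exists>s x. z = (fst V, s, x) \<and> s \<in> Orth (fst V) \<and> x \<in> topspace (sp A (trivo G (fst V))))" for V z
    by (cases z) (auto simp: topspace_coprod Hom_trivo RA)
  show ?thesis
proof (intro conjI ballI allI impI)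
  fix V assume V: "V \<in> Obj G"
  define k where "k = fst V"
  have idH1: "idm k \<in> Hom (trivo G k) V" and idH2: "idm k \<in> Hom V (trivo G k)"
    by (auto simp: Hom_def k_def idm_Orth)
  {
    define \<psi> where "\<psi> a = eclass G (Res G A) V (k, idm k, mor A V (trivo G k) (idm k) a)" for a
    have Fcont: "continuous_map (coprod G (Res G A) V) (sp A V) (Fc G A V)"
      unfolding coprod_def
    proof (rule continuous_map_from_sum)
      fix i :: nat
      have "(\<lambda>x. Fc G A V (i, x)) = (\<lambda>(f, x). mor A (trivo G i) V f x)"
        by (auto simp: Fc_def)
      then show "continuous_map (prod_topology (Hom_top (trivo G i) V) (Isp (Res G A) i)) (sp A V)
          (\<lambda>x. Fc G A V (i, x))"
        using IG_cont[OF IA TO V] by (simp add: RA)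
    qed
    have c1: "continuous_map (E_top G (Res G A) V) (sp A V) (counit G A V)"
      unfolding E_top_def
      by (rule continuous_map_from_quot[OF Fcont]) (rule counit_eclass[OF grp IA V])
    have mc: "continuous_map (sp A V) (sp A (trivo G k)) (mor A V (trivo G k) (idm k))"
    proof -
      have "continuous_map (sp A V) (prod_topology (Hom_top V (trivo G k)) (sp A V)) (\<lambda>a. (idm k, a))"
        by (rule continuous_map_pairedI) (use idH2 in auto)
      from continuous_map_compose[OF this IG_cont[OF IA V TO]] show ?thesis by (simp add: o_def)
    qed
    have inner: "continuous_map (sp A V) (coprod G (Res G A) V) (\<lambda>a. (k, idm k, mor A V (trivo G k) (idm k) a))"
    proof -
      have "continuous_map (sp A V) (prod_topology (Hom_top (trivo G k) V) (Isp (Res G A) k))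
             (\<lambda>a. (idm k, mor A V (trivo G k) (idm k) a))"
        by (rule continuous_map_pairedI) (use idH1 mc in \<open>auto simp: RA\<close>)
      from continuous_map_compose[OF this continuous_map_component_injection[where X="\<lambda>n. prod_topology (Hom_top (trivo G n) V) (Isp (Res G A) n)" and i=k and I=UNIV, OF UNIV_I]]
      show ?thesis unfolding coprod_def by (simp add: o_def)
    qed
    have c2: "continuous_map (sp A V) (E_top G (Res G A) V) \<psi>"
      unfolding E_top_def \<psi>_def
      using continuous_map_compose[OF inner continuous_map_quot] by (simp add: o_def)
    have i1: "\<psi> (counit G A V C) = C" if C: "C \<in> topspace (E_top G (Res G A) V)" for C
    proof -
      from C obtain z where z: "z \<in> topspace (coprod G (Res G A) V)" "C = eclass G (Res G A) V z"
        unfolding topspace_E_top by auto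
      then obtain s x where sx: "z = (k, s, x)" "s \<in> Orth k" "x \<in> topspace (sp A (trivo G k))"
        using tsp k_def by auto
      have sH: "s \<in> Hom (trivo G k) V" using sx by (simp add: Hom_def k_def)
      have sH': "s \<in> Hom (trivo G k) (trivo G k)" using sx by (simp add: Hom_def)
      have "counit G A V C = mor A (trivo G k) V s x"
        using counit_eclass[OF grp IA V z(1)] z sx by (simp add: Fc_def)
      then have "\<psi> (counit G A V C) = eclass G (Res G A) V (k, idm k, mor A (trivo G k) (trivo G k) (matmul k (idm k) s) x)"
        unfolding \<psi>_def using IG_comp[OF IA TO V TO sH idH2 sx(3)] by simp
      also have "\<dots> = eclass G (Res G A) V (k, idm k, mor A (trivo G k) (trivo G k) s x)"
        using matmul_idm_left[OF Orth_Mats[OF sx(2)]] by simp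
      also have "\<dots> = eclass G (Res G A) V (k, matmul k (idm k) s, x)"
      proof (rule sym, rule eclass_erel)
        show "erel G (Res G A) V (k, matmul k (idm k) s, x) (k, idm k, mor A (trivo G k) (trivo G k) s x)"
          unfolding erel_def using sH' idH1 sx(3) by (auto simp: RA)
      qed
      also have "\<dots> = C" using z sx matmul_idm_left[OF Orth_Mats[OF sx(2)]] by simp
      finally show ?thesis .
    qed
    have i2: "counit G A V (\<psi> a) = a" if a: "a \<in> topspace (sp A V)" for a
    proof -
      have m: "mor A V (trivo G k) (idm k) a \<in> topspace (sp A (trivo G k))"
        by (rule IG_mor_top[OF IA V TO idH2 a])
      have "(k, idm k, mor A V (trivo G k) (idm k) a) \<in> topspace (coprod G (Res G A) V)"
        using tsp k_def m idm_Orth by auto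
      then have "counit G A V (\<psi> a) = mor A (trivo G k) V (idm k) (mor A V (trivo G k) (idm k) a)"
        unfolding \<psi>_def by (simp add: counit_eclass[OF grp IA V] Fc_def)
      also have "\<dots> = mor A V V (matmul k (idm k) (idm k)) a"
        using IG_comp[OF IA V TO V idH2 idH1 a] by (simp add: k_def)
      also have "\<dots> = a" using matmul_idm_left[OF idm_Mats] IG_id[OF IA V a] by (simp add: k_def)
      finally show ?thesis .
    qed
    show "homeomorphic_map (E_top G (Res G A) V) (sp A V) (counit G A V)"
      unfolding homeomorphic_map_maps homeomorphic_maps_def
      using c1 c2 i1 i2 by blast
  }
  {
    have b: "bp A (trivo G k) \<in> topspace (sp A (trivo G k))"
      using IG_based[OF IA TO] by (simp add: based_Gspace_def)
    have "(k, idm k, bp A (trivo G k)) \<in> topspace (coprod G (Res G A) V)"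
      using tsp k_def b idm_Orth by auto
    then have "counit G A V (E_bp G (Res G A) V) = mor A (trivo G k) V (idm k) (bp A (trivo G k))"
      unfolding E_bp_def by (simp add: counit_eclass[OF grp IA V] Fc_def RA k_def[symmetric])
    also have "\<dots> = bp A V" using IG_bp[OF IA TO V idH1] .
    finally show "counit G A V (E_bp G (Res G A) V) = bp A V" .
  }
  {
    fix g C assume g: "g \<in> carrier G" and C: "C \<in> topspace (E_top G (Res G A) V)"
    obtain s x where w: "E_rep G (Res G A) V C = (k, s, x)" "s \<in> Orth k" "x \<in> topspace (sp A (trivo G k))"
      using E_rep[OF C] tsp k_def by metis
    have sH: "s \<in> Hom (trivo G k) V" using w by (simp add: Hom_def k_def)
    have ig: "inv\<^bsub>G\<^esub> g \<in> carrier G" using g by simp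
    have bt: "based_Gspace G (sp A (trivo G k)) (bp A (trivo G k)) (act A (trivo G k))"
      by (rule IG_based[OF IA TO])
    have gx: "act A (trivo G k) g x \<in> topspace (sp A (trivo G k))"
      using bt g w(3) unfolding based_Gspace_def by (meson continuous_map_image_subset_topspace image_subset_iff)
    have inv_act: "act A (trivo G k) (inv\<^bsub>G\<^esub> g) (act A (trivo G k) g x) = x"
      using bt g ig w(3) unfolding based_Gspace_def by (metis l_inv)
    have rhoO: "snd V g \<in> Orth k" using V g unfolding Obj_def k_def by auto
    have cj: "conj_hom G (trivo G k) V g s = matmul k (snd V g) s"
      unfolding conj_hom_def using snd_trivo[OF ig] matmul_idm_right[OF Orth_Mats[OF w(2)]] by simp
    have mem: "(k, conj_hom G (trivo G k) V g s, act A (trivo G k) g x) \<in> topspace (coprod G (Res G A) V)"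
      using tsp k_def cj matmul_Orth[OF rhoO w(2)] gx by auto
    have "counit G A V (E_act G (Res G A) V g C) = mor A (trivo G k) V (conj_hom G (trivo G k) V g s) (act A (trivo G k) g x)"
      unfolding E_act_def w(1) using counit_eclass[OF grp IA V mem] by (simp add: Fc_def RA)
    also have "\<dots> = act A V g (mor A (trivo G k) V s x)"
      using IG_conj[OF IA TO V g sH gx] inv_act by simp
    also have "\<dots> = act A V g (counit G A V C)"
      using counit_rep[of G A V C] w(1) by (simp add: Fc_def)
    finally show "counit G A V (E_act G (Res G A) V g C) = act A V g (counit G A V C)" .
  }
next
  show "counit G A W (E_mor G (Res G A) V W f C) = mor A V W f (counit G A V C)"
    if V: "V \<in> Obj G" and W: "W \<in> Obj G" and f: "f \<in> Hom V W" and C: "C \<in> topspace (E_top G (Res G A) V)" for V W f C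
  proof -
    define k where "k = fst V"
    obtain s x where w: "E_rep G (Res G A) V C = (k, s, x)" "s \<in> Orth k" "x \<in> topspace (sp A (trivo G k))"
      using E_rep[OF C] tsp k_def by metis
    have sH: "s \<in> Hom (trivo G k) V" using w by (simp add: Hom_def k_def)
    have fk: "fst W = k" "f \<in> Orth k" using f by (auto simp: Hom_def k_def split: if_splits)
    have mem: "(k, matmul k f s, x) \<in> topspace (coprod G (Res G A) W)"
      using tsp fk matmul_Orth[OF fk(2) w(2)] w(3) by auto
    have "counit G A W (E_mor G (Res G A) V W f C) = mor A (trivo G k) W (matmul k f s) x"
      unfolding E_mor_def w(1) using counit_eclass[OF grp IA W mem] by (simp add: Fc_def)
    also have "\<dots> = mor A V W f (mor A (trivo G k) V s x)"
      using IG_comp[OF IA TO V W sH f w(3)] by simp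
    also have "\<dots> = mor A V W f (counit G A V C)"
      using counit_rep[of G A V C] w(1) by (simp add: Fc_def)
    finally show ?thesis .
  qed
next
  show "counit G B V (ER_map G A B \<phi> V C) = \<phi> V (counit G A V C)"
    if BB: "IG_space G B \<and> IG_morph G A B \<phi>" and V: "V \<in> Obj G" and C: "C \<in> topspace (E_top G (Res G A) V)" for \<phi> V C
  proof -
    define k where "k = fst V"
    have IB: "IG_space G B" and M: "IG_morph G A B \<phi>" using BB by auto
    obtain s x where w: "E_rep G (Res G A) V C = (k, s, x)" "s \<in> Orth k" "x \<in> topspace (sp A (trivo G k))"
      using E_rep[OF C] tsp k_def by metis
    have sH: "s \<in> Hom (trivo G k) V" using w by (simp add: Hom_def k_def)
    have cm: "continuous_map (sp A (trivo G k)) (sp B (trivo G k)) (\<phi> (trivo G k))"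
      using M TO unfolding IG_morph_def by blast
    have px: "\<phi> (trivo G k) x \<in> topspace (sp B (trivo G k))"
      using cm w(3) by (meson continuous_map_image_subset_topspace image_subset_iff)
    have nat: "\<phi> V (mor A (trivo G k) V s x) = mor B (trivo G k) V s (\<phi> (trivo G k) x)"
      using M TO V sH w(3) unfolding IG_morph_def by blast
    have mem: "(k, s, \<phi> (trivo G k) x) \<in> topspace (coprod G (Res G B) V)"
      using sH px by (simp add: topspace_coprod Res_def)
    have "counit G B V (ER_map G A B \<phi> V C) = mor B (trivo G k) V s (\<phi> (trivo G k) x)"
      unfolding ER_map_def w(1) using counit_eclass[OF grp IB V mem] by (simp add: Fc_def)
    also have "\<dots> = \<phi> V (counit G A V C)"
      using counit_rep[of G A V C] w(1) nat by (simp add: Fc_def)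
    finally show ?thesis .
  qed
qed
qed

end
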